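(* Let $V$ be the crossed module with group part $\langle a\mid a^4=1\rangle\cong C_4$, module part $\langle b\mid b^4=1\rangle\cong C_4$, structure morphism $\mu(b)=a^2$ and action ${}^ab=b^{-1}$. Then for $n\in\mathbb N_0$ (with $\mathbb Z/n$ a trivial module, $\mathbb Z/0=\mathbb Z$), \[H^2(V,\mathbb Z/n)\cong\begin{cases}\mathbb Z/2 & n\text{ even},\\ 0 & n\text{ odd}.\end{cases}\]
   Context: A crossed module $V=(G_V,M_V,\mu)$: left action ${}^gm$ of $G_V$ on $M_V$, $\mu({}^gm)=g\mu(m)g^{-1}$, ${}^{\mu(n)}m=nmn^{-1}$. With $\bar g$ the class of $g$ in $\pi_0(V)=G_V/\mu(M_V)$ and $M$ an abelian $\pi_0(V)$-module, $H^2(V,M)$ is the second cohomology of $C^1(V,M)=\mathrm{Map}(G_V,M)\to C^2(V,M)=\mathrm{Map}(M_V\times G_V\times G_V,M)\to C^3(V,M)=\mathrm{Map}(M_V\times M_V\times G_V\times M_V\times G_V\times G_V,M)$, $(dc)(m,h,g)=c(\mu(m)h)-c(hg)+\bar hc(g)$, $(dc)(p,n,k,m,h,g)=c(p,\mu(n)k,\mu(m)h)-c(pn,k,hg)+c(n\,{}^km,kh,g)-\bar kc(m,h,g)$ (equivalently, the cohomology of the associated coskeleton simplicial group). *)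

theory Defs
  imports "HOL-Algebra.Algebra"
begin

definition Zmod :: "nat \<Rightarrow> int monoid" where
  "Zmod n = (if n = 0 then \<lparr>carrier = UNIV, monoid.mult = (+), one = 0\<rparr>
             else \<lparr>carrier = {0..<int n}, monoid.mult = (\<lambda>x y. (x + y) mod int n), one = 0\<rparr>)"

text \<open>The action of pi_0(V) on A is given as phi : G_V -> (A -> A), factoring through pi_0(V).
  Abelian groups are written multiplicatively (HOL-Algebra convention).\<close>

definition xm_dom2 where
  "xm_dom2 G Mv = carrier Mv \<times> carrier G \<times> carrier G"

definition xm_dom3 where
  "xm_dom3 G Mv = carrier Mv \<times> carrier Mv \<times> carrier G \<times> carrier Mv \<times> carrier G \<times> carrier G"

definition xm_C1 where
  "xm_C1 G A = (carrier G \<rightarrow>\<^sub>E carrier A)"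

definition xm_C2 where
  "xm_C2 G Mv A = (xm_dom2 G Mv \<rightarrow>\<^sub>E carrier A)"

definition xm_d1 where
  "xm_d1 G Mv A mu phi c = (\<lambda>(m, h, g) \<in> xm_dom2 G Mv.
      c (mu m \<otimes>\<^bsub>G\<^esub> h) \<otimes>\<^bsub>A\<^esub> inv\<^bsub>A\<^esub> (c (h \<otimes>\<^bsub>G\<^esub> g)) \<otimes>\<^bsub>A\<^esub> phi h (c g))"

definition xm_d2 where
  "xm_d2 G Mv A mu act phi c = (\<lambda>(p, n, k, m, h, g) \<in> xm_dom3 G Mv.
      c (p, mu n \<otimes>\<^bsub>G\<^esub> k, mu m \<otimes>\<^bsub>G\<^esub> h)
      \<otimes>\<^bsub>A\<^esub> inv\<^bsub>A\<^esub> (c (p \<otimes>\<^bsub>Mv\<^esub> n, k, h \<otimes>\<^bsub>G\<^esub> g))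
      \<otimes>\<^bsub>A\<^esub> c (n \<otimes>\<^bsub>Mv\<^esub> act k m, k \<otimes>\<^bsub>G\<^esub> h, g)
      \<otimes>\<^bsub>A\<^esub> inv\<^bsub>A\<^esub> (phi k (c (m, h, g))))"

definition xm_Z2 where
  "xm_Z2 G Mv A mu act phi =
     {c \<in> xm_C2 G Mv A. \<forall>x \<in> xm_dom3 G Mv. xm_d2 G Mv A mu act phi c x = \<one>\<^bsub>A\<^esub>}"

definition xm_B2 where
  "xm_B2 G Mv A mu phi = xm_d1 G Mv A mu phi ` xm_C1 G A"

definition xm_Z2_group where
  "xm_Z2_group G Mv A mu act phi =
     \<lparr>carrier = xm_Z2 G Mv A mu act phi,
      monoid.mult = (\<lambda>c c'. \<lambda>x \<in> xm_dom2 G Mv. c x \<otimes>\<^bsub>A\<^esub> c' x),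
      one = (\<lambda>x \<in> xm_dom2 G Mv. \<one>\<^bsub>A\<^esub>)\<rparr>"

definition xm_H2 where
  "xm_H2 G Mv A mu act phi =
     xm_Z2_group G Mv A mu act phi Mod xm_B2 G Mv A mu phi"

section \<open>The specific crossed module V: G_V = <a | a^4> = Z/4 (a = 1), M_V = <b | b^4> = Z/4 (b = 1),
  mu(b) = a^2, and a acts by b |-> b^{-1}\<close>

definition V_G :: "int monoid" where "V_G = Zmod 4"
definition V_M :: "int monoid" where "V_M = Zmod 4"
definition V_mu :: "int \<Rightarrow> int" where "V_mu m = (2 * m) mod 4"
definition V_act :: "int \<Rightarrow> int \<Rightarrow> int" where
  "V_act g m = (if even g then m else (- m) mod 4)"

definition trivial_action :: "int \<Rightarrow> int \<Rightarrow> int" where "trivial_action g x = x"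

end

theory Submission
  imports Defs
begin

lemma Zmod_eq: "Zmod n = integer_mod_group n"
  by (simp add: Zmod_def integer_mod_group_def integer_group_def)

lemma carrier_Zmod: fixes n :: nat shows "carrier (Zmod n) = {x. x mod int n = x}"
proof (cases "n = 0")
  case True then show ?thesis by (simp add: Zmod_def)
next
  case False
  then have np: "int n > 0" by simp
  have "x \<in> carrier (Zmod n) \<longleftrightarrow> x mod int n = x" for x
  proof
    assume "x \<in> carrier (Zmod n)"
    then show "x mod int n = x" using False by (simp add: Zmod_def)
  next
    assume a: "x mod int n = x"
    have "0 \<le> x mod int n" "x mod int n < int n" using np by simp_all
    then show "x \<in> carrier (Zmod n)" using False a by (simp add: Zmod_def)
  qed
  then show ?thesis by blast
qed

lemma mult_Zmod[simp]: "x \<otimes>\<^bsub>Zmod n\<^esub> y = (x + y) mod int n"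
  by (simp add: Zmod_eq)
lemma one_Zmod[simp]: "\<one>\<^bsub>Zmod n\<^esub> = 0"
  by (simp add: Zmod_eq)
lemma inv_Zmod: "x \<in> carrier (Zmod n) \<Longrightarrow> inv\<^bsub>Zmod n\<^esub> x = (- x) mod int n"
  by (simp add: Zmod_eq)

lemma carrier_VG: "carrier V_G = {0..<4}" by (simp add: V_G_def Zmod_def)
lemma carrier_VM: "carrier V_M = {0..<4}" by (simp add: V_M_def Zmod_def)
lemma mult_VG[simp]: "x \<otimes>\<^bsub>V_G\<^esub> y = (x + y) mod 4" by (simp add: V_G_def Zmod_def)
lemma mult_VM[simp]: "x \<otimes>\<^bsub>V_M\<^esub> y = (x + y) mod 4" by (simp add: V_M_def Zmod_def)

lemma dom2_eq: "xm_dom2 V_G V_M = {0..<4} \<times> {0..<4} \<times> {0..<4}"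
  by (simp add: xm_dom2_def carrier_VG carrier_VM)
lemma dom3_eq: "xm_dom3 V_G V_M = {0..<4} \<times> {0..<4} \<times> {0..<4} \<times> {0..<4} \<times> {0..<4} \<times> {0..<4}"
  by (simp add: xm_dom3_def carrier_VG carrier_VM)

definition cf :: "(int \<times> int \<times> int \<Rightarrow> int) \<Rightarrow> int \<Rightarrow> int \<Rightarrow> int \<Rightarrow> int \<Rightarrow> int \<Rightarrow> int \<Rightarrow> int" where
  "cf c p n k m h g = c (p, (2*n mod 4 + k) mod 4, (2*m mod 4 + h) mod 4) - c ((p+n) mod 4, k, (h+g) mod 4)
     + c ((n + V_act k m) mod 4, (k+h) mod 4, g) - c (m,h,g)"

abbreviation "AA n \<equiv> Zmod n"
abbreviation "Z2 n \<equiv> xm_Z2 V_G V_M (Zmod n) V_mu V_act trivial_action"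


lemma d2_eq:
  assumes c: "c \<in> xm_C2 V_G V_M (Zmod n)"
    and x: "p \<in> {0..<4}" "q \<in> {0..<4}" "k \<in> {0..<4}" "m \<in> {0..<4}" "h \<in> {0..<4}" "g \<in> {0..<4}"
  shows "xm_d2 V_G V_M (Zmod n) V_mu V_act trivial_action c (p,q,k,m,h,g) = cf c p q k m h g mod int n"
proof -
  have cc: "\<And>a b d. a \<in> {0..<4} \<Longrightarrow> b \<in> {0..<4} \<Longrightarrow> d \<in> {0..<4} \<Longrightarrow> c (a,b,d) \<in> carrier (Zmod n)"
    using c by (auto simp: xm_C2_def dom2_eq)
  have r: "\<And>a::int. a mod 4 \<in> {0..<4}" by simp
  have mem: "(p,q,k,m,h,g) \<in> xm_dom3 V_G V_M" using x by (simp add: dom3_eq)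
  have "xm_d2 V_G V_M (Zmod n) V_mu V_act trivial_action c (p,q,k,m,h,g) =
    (((c (p, (2*q mod 4 + k) mod 4, (2*m mod 4 + h) mod 4) + (- c ((p+q) mod 4, k, (h+g) mod 4)) mod int n) mod int n
      + c ((q + V_act k m) mod 4, (k+h) mod 4, g)) mod int n + (- c (m,h,g)) mod int n) mod int n"
    apply (simp only: xm_d2_def restrict_apply' [OF mem] prod.case mult_Zmod mult_VG mult_VM V_mu_def trivial_action_def)
    apply (simp only: inv_Zmod[OF cc] r x)
    done
  also have "\<dots> = cf c p q k m h g mod int n"
    by (simp only: mod_add_left_eq mod_add_right_eq cf_def diff_conv_add_uminus add.assoc)
  finally show ?thesis .
qed


lemma comb4:
  fixes N :: int
  assumes "N dvd a1" "N dvd a2" "N dvd a3" "N dvd a4" "x = u*a1 + v*a2 + w*a3 + z*a4"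
  shows "N dvd x"
  using assms by simp

definition Fv :: "(int \<times> int \<times> int \<Rightarrow> int) \<Rightarrow> int \<Rightarrow> int" where
  "Fv c g = (if g = 0 then c (0,0,0) else if g = 1 then c (0,1,2) - c (3,3,2) else if g = 2 then c (3,3,2) else 0)"
definition Tv :: "(int \<times> int \<times> int \<Rightarrow> int) \<Rightarrow> int" where
  "Tv c = c (3,3,1) - 2 * c (0,1,2) + 2 * c (3,3,2) + c (0,0,0)"
definition tgt :: "(int \<times> int \<times> int \<Rightarrow> int) \<Rightarrow> int \<Rightarrow> int \<Rightarrow> int \<Rightarrow> int" where
  "tgt c m h g = Fv c ((2*m mod 4 + h) mod 4) - Fv c ((h+g) mod 4) + Fv c g + (if odd h \<and> odd g then Tv c else 0)"

lemma key:
  fixes N :: int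
  assumes E: "\<And>p q k m h g. p \<in> {0..<4} \<Longrightarrow> q \<in> {0..<4} \<Longrightarrow> k \<in> {0..<4} \<Longrightarrow> m \<in> {0..<4} \<Longrightarrow> h \<in> {0..<4} \<Longrightarrow> g \<in> {0..<4} \<Longrightarrow> N dvd cf c p q k m h g"
  shows "\<forall>m\<in>{0..<4}. \<forall>h\<in>{0..<4}. \<forall>g\<in>{0..<4}. N dvd (c (m,h,g) - tgt c m h g)"
proof -
  have f_0_0_0: "N dvd (c (0,0,0) - tgt c 0 0 0)" by (simp add: tgt_def Fv_def Tv_def)
  have f_0_1_2: "N dvd (c (0,1,2) - tgt c 0 1 2)" by (simp add: tgt_def Fv_def Tv_def)
  have f_3_3_2: "N dvd (c (3,3,2) - tgt c 3 3 2)" by (simp add: tgt_def Fv_def Tv_def)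
  have f_3_3_1: "N dvd (c (3,3,1) - tgt c 3 3 1)" by (simp add: tgt_def Fv_def Tv_def)
  have f_0_0_1: "N dvd (c (0,0,1) - tgt c 0 0 1)"
    by (rule comb4[OF E[of 0 0 0 0 0 1, simplified] dvd_0_right dvd_0_right dvd_0_right, where u="-1" and v="0" and w="0" and z="0"])
       (simp add: cf_def V_act_def tgt_def Fv_def Tv_def algebra_simps)
  have f_0_0_2: "N dvd (c (0,0,2) - tgt c 0 0 2)"
    by (rule comb4[OF E[of 0 0 0 0 0 2, simplified] dvd_0_right dvd_0_right dvd_0_right, where u="-1" and v="0" and w="0" and z="0"])
       (simp add: cf_def V_act_def tgt_def Fv_def Tv_def algebra_simps)
  have f_0_0_3: "N dvd (c (0,0,3) - tgt c 0 0 3)"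
    by (rule comb4[OF E[of 0 0 0 0 0 3, simplified] dvd_0_right dvd_0_right dvd_0_right, where u="-1" and v="0" and w="0" and z="0"])
       (simp add: cf_def V_act_def tgt_def Fv_def Tv_def algebra_simps)
  have f_0_1_0: "N dvd (c (0,1,0) - tgt c 0 1 0)"
    by (rule comb4[OF E[of 0 0 1 0 0 0, simplified] dvd_0_right dvd_0_right dvd_0_right, where u="1" and v="0" and w="0" and z="0"])
       (simp add: cf_def V_act_def tgt_def Fv_def Tv_def algebra_simps)
  have f_0_2_0: "N dvd (c (0,2,0) - tgt c 0 2 0)"
    by (rule comb4[OF E[of 0 0 1 0 1 0, simplified] f_0_1_0 dvd_0_right dvd_0_right, where u="1" and v="1" and w="0" and z="0"])
       (simp add: cf_def V_act_def tgt_def Fv_def Tv_def algebra_simps)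
  have f_0_2_1: "N dvd (c (0,2,1) - tgt c 0 2 1)"
    by (rule comb4[OF E[of 0 0 1 0 1 1, simplified] dvd_0_right dvd_0_right dvd_0_right, where u="1" and v="0" and w="0" and z="0"])
       (simp add: cf_def V_act_def tgt_def Fv_def Tv_def algebra_simps)
  have f_0_3_0: "N dvd (c (0,3,0) - tgt c 0 3 0)"
    by (rule comb4[OF E[of 0 0 1 0 2 0, simplified] f_0_2_0 dvd_0_right dvd_0_right, where u="1" and v="1" and w="0" and z="0"])
       (simp add: cf_def V_act_def tgt_def Fv_def Tv_def algebra_simps)
  have f_1_2_2: "N dvd (c (1,2,2) - tgt c 1 2 2)"
    by (rule comb4[OF E[of 0 0 1 1 2 2, simplified] dvd_0_right dvd_0_right dvd_0_right, where u="-1" and v="0" and w="0" and z="0"])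
       (simp add: cf_def V_act_def tgt_def Fv_def Tv_def algebra_simps)
  have f_3_1_2: "N dvd (c (3,1,2) - tgt c 3 1 2)"
    by (rule comb4[OF E[of 0 0 1 3 1 2, simplified] f_1_2_2 dvd_0_right dvd_0_right, where u="-1" and v="1" and w="0" and z="0"])
       (simp add: cf_def V_act_def tgt_def Fv_def Tv_def algebra_simps)
  have f_1_0_2: "N dvd (c (1,0,2) - tgt c 1 0 2)"
    by (rule comb4[OF E[of 0 0 1 3 3 2, simplified] dvd_0_right dvd_0_right dvd_0_right, where u="1" and v="0" and w="0" and z="0"])
       (simp add: cf_def V_act_def tgt_def Fv_def Tv_def algebra_simps)
  have f_3_1_1: "N dvd (c (3,1,1) - tgt c 3 1 1)"
    by (rule comb4[OF E[of 0 0 2 3 3 1, simplified] f_0_2_0 f_0_2_1 dvd_0_right, where u="1" and v="1" and w="-1" and z="0"])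
       (simp add: cf_def V_act_def tgt_def Fv_def Tv_def algebra_simps)
  have f_1_0_0: "N dvd (c (1,0,0) - tgt c 1 0 0)"
    by (rule comb4[OF E[of 0 1 0 0 2 2, simplified] f_1_2_2 dvd_0_right dvd_0_right, where u="-1" and v="1" and w="0" and z="0"])
       (simp add: cf_def V_act_def tgt_def Fv_def Tv_def algebra_simps)
  have f_2_2_2: "N dvd (c (2,2,2) - tgt c 2 2 2)"
    by (rule comb4[OF E[of 0 1 0 1 2 2, simplified] f_0_2_0 f_1_0_0 f_1_2_2, where u="1" and v="-1" and w="1" and z="1"])
       (simp add: cf_def V_act_def tgt_def Fv_def Tv_def algebra_simps)
  have f_2_1_1: "N dvd (c (2,1,1) - tgt c 2 1 1)"
    by (rule comb4[OF E[of 0 1 0 2 1 1, simplified] f_0_2_1 f_1_0_2 f_3_1_1, where u="-1" and v="1" and w="-1" and z="1"])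
       (simp add: cf_def V_act_def tgt_def Fv_def Tv_def algebra_simps)
  have f_3_2_0: "N dvd (c (3,2,0) - tgt c 3 2 0)"
    by (rule comb4[OF E[of 0 1 0 3 2 0, simplified] f_0_2_0 f_1_0_2 dvd_0_right, where u="-1" and v="2" and w="-1" and z="0"])
       (simp add: cf_def V_act_def tgt_def Fv_def Tv_def algebra_simps)
  have f_0_3_1: "N dvd (c (0,3,1) - tgt c 0 3 1)"
    by (rule comb4[OF E[of 0 1 0 3 3 1, simplified] f_0_2_1 f_1_0_0 dvd_0_right, where u="1" and v="-1" and w="1" and z="0"])
       (simp add: cf_def V_act_def tgt_def Fv_def Tv_def algebra_simps)
  have f_1_1_3: "N dvd (c (1,1,3) - tgt c 1 1 3)"
    by (rule comb4[OF E[of 0 1 1 0 1 2, simplified] f_0_3_1 f_1_2_2 dvd_0_right, where u="-1" and v="1" and w="1" and z="0"])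
       (simp add: cf_def V_act_def tgt_def Fv_def Tv_def algebra_simps)
  have f_0_3_3: "N dvd (c (0,3,3) - tgt c 0 3 3)"
    by (rule comb4[OF E[of 0 1 1 0 3 0, simplified] f_0_3_0 f_1_0_0 f_1_1_3, where u="1" and v="1" and w="-1" and z="1"])
       (simp add: cf_def V_act_def tgt_def Fv_def Tv_def algebra_simps)
  have f_1_2_1: "N dvd (c (1,2,1) - tgt c 1 2 1)"
    by (rule comb4[OF E[of 0 1 1 1 2 1, simplified] f_0_3_0 f_0_3_1 f_1_1_3, where u="-1" and v="1" and w="1" and z="-1"])
       (simp add: cf_def V_act_def tgt_def Fv_def Tv_def algebra_simps)
  have f_1_3_0: "N dvd (c (1,3,0) - tgt c 1 3 0)"
    by (rule comb4[OF E[of 0 1 1 1 3 0, simplified] f_0_3_1 f_1_1_3 dvd_0_right, where u="-1" and v="1" and w="-1" and z="0"])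
       (simp add: cf_def V_act_def tgt_def Fv_def Tv_def algebra_simps)
  have f_2_3_2: "N dvd (c (2,3,2) - tgt c 2 3 2)"
    by (rule comb4[OF E[of 0 1 2 2 3 2, simplified] f_0_0_3 f_1_2_1 f_3_1_2, where u="-1" and v="1" and w="-1" and z="1"])
       (simp add: cf_def V_act_def tgt_def Fv_def Tv_def algebra_simps)
  have f_3_0_1: "N dvd (c (3,0,1) - tgt c 3 0 1)"
    by (rule comb4[OF E[of 0 1 2 3 0 1, simplified] f_0_0_2 f_0_2_1 f_1_2_1, where u="-1" and v="1" and w="1" and z="-1"])
       (simp add: cf_def V_act_def tgt_def Fv_def Tv_def algebra_simps)
  have f_3_1_0: "N dvd (c (3,1,0) - tgt c 3 1 0)"
    by (rule comb4[OF E[of 0 1 2 3 1 0, simplified] f_0_0_3 f_0_3_0 f_1_2_1, where u="-1" and v="1" and w="1" and z="-1"])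
       (simp add: cf_def V_act_def tgt_def Fv_def Tv_def algebra_simps)
  have f_3_2_3: "N dvd (c (3,2,3) - tgt c 3 2 3)"
    by (rule comb4[OF E[of 0 1 2 3 2 3, simplified] f_0_0_3 f_1_2_1 dvd_0_right, where u="-1" and v="1" and w="-1" and z="0"])
       (simp add: cf_def V_act_def tgt_def Fv_def Tv_def algebra_simps)
  have f_0_1_3: "N dvd (c (0,1,3) - tgt c 0 1 3)"
    by (rule comb4[OF E[of 0 1 3 0 3 1, simplified] f_0_3_1 f_1_2_1 f_1_3_0, where u="1" and v="1" and w="-1" and z="1"])
       (simp add: cf_def V_act_def tgt_def Fv_def Tv_def algebra_simps)
  have f_2_2_3: "N dvd (c (2,2,3) - tgt c 2 2 3)"
    by (rule comb4[OF E[of 0 2 1 2 2 3, simplified] f_0_3_3 f_2_1_1 dvd_0_right, where u="-1" and v="1" and w="-1" and z="0"])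
       (simp add: cf_def V_act_def tgt_def Fv_def Tv_def algebra_simps)
  have f_3_3_3: "N dvd (c (3,3,3) - tgt c 3 3 3)"
    by (rule comb4[OF E[of 0 2 1 3 2 3, simplified] f_0_1_0 f_2_1_1 f_3_2_3, where u="1" and v="-1" and w="1" and z="1"])
       (simp add: cf_def V_act_def tgt_def Fv_def Tv_def algebra_simps)
  have f_3_0_3: "N dvd (c (3,0,3) - tgt c 3 0 3)"
    by (rule comb4[OF E[of 0 3 0 0 1 2, simplified] f_0_2_1 f_3_1_2 dvd_0_right, where u="-1" and v="1" and w="1" and z="0"])
       (simp add: cf_def V_act_def tgt_def Fv_def Tv_def algebra_simps)
  have f_1_0_1: "N dvd (c (1,0,1) - tgt c 1 0 1)"
    by (rule comb4[OF E[of 1 0 0 0 0 1, simplified] f_1_0_0 dvd_0_right dvd_0_right, where u="-1" and v="1" and w="0" and z="0"])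
       (simp add: cf_def V_act_def tgt_def Fv_def Tv_def algebra_simps)
  have f_1_0_3: "N dvd (c (1,0,3) - tgt c 1 0 3)"
    by (rule comb4[OF E[of 1 0 0 0 0 3, simplified] f_1_0_0 dvd_0_right dvd_0_right, where u="-1" and v="1" and w="0" and z="0"])
       (simp add: cf_def V_act_def tgt_def Fv_def Tv_def algebra_simps)
  have f_1_1_0: "N dvd (c (1,1,0) - tgt c 1 1 0)"
    by (rule comb4[OF E[of 1 0 1 0 0 3, simplified] f_0_0_3 f_0_1_3 f_1_1_3, where u="1" and v="1" and w="-1" and z="1"])
       (simp add: cf_def V_act_def tgt_def Fv_def Tv_def algebra_simps)
  have f_1_1_2: "N dvd (c (1,1,2) - tgt c 1 1 2)"
    by (rule comb4[OF E[of 1 0 1 0 2 1, simplified] f_0_2_1 f_0_3_1 f_1_1_3, where u="1" and v="1" and w="-1" and z="1"])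
       (simp add: cf_def V_act_def tgt_def Fv_def Tv_def algebra_simps)
  have f_1_1_1: "N dvd (c (1,1,1) - tgt c 1 1 1)"
    by (rule comb4[OF E[of 1 0 1 1 0 1, simplified] f_1_0_1 f_1_1_2 f_3_1_1, where u="-1" and v="-1" and w="1" and z="1"])
       (simp add: cf_def V_act_def tgt_def Fv_def Tv_def algebra_simps)
  have f_3_1_3: "N dvd (c (3,1,3) - tgt c 3 1 3)"
    by (rule comb4[OF E[of 1 0 1 1 0 3, simplified] f_1_0_3 f_1_1_2 f_1_1_3, where u="1" and v="1" and w="-1" and z="1"])
       (simp add: cf_def V_act_def tgt_def Fv_def Tv_def algebra_simps)
  have f_3_2_1: "N dvd (c (3,2,1) - tgt c 3 2 1)"
    by (rule comb4[OF E[of 1 0 1 1 1 1, simplified] f_1_1_1 f_1_1_2 f_1_1_3, where u="1" and v="1" and w="1" and z="-1"])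
       (simp add: cf_def V_act_def tgt_def Fv_def Tv_def algebra_simps)
  have f_3_2_2: "N dvd (c (3,2,2) - tgt c 3 2 2)"
    by (rule comb4[OF E[of 1 0 1 1 1 2, simplified] f_1_1_2 dvd_0_right dvd_0_right, where u="1" and v="1" and w="0" and z="0"])
       (simp add: cf_def V_act_def tgt_def Fv_def Tv_def algebra_simps)
  have f_1_2_3: "N dvd (c (1,2,3) - tgt c 1 2 3)"
    by (rule comb4[OF E[of 1 0 1 1 2 3, simplified] f_1_1_0 f_1_1_1 f_3_3_3, where u="-1" and v="1" and w="-1" and z="1"])
       (simp add: cf_def V_act_def tgt_def Fv_def Tv_def algebra_simps)
  have f_3_0_0: "N dvd (c (3,0,0) - tgt c 3 0 0)"
    by (rule comb4[OF E[of 1 0 1 1 3 0, simplified] f_1_1_1 f_1_1_3 f_1_3_0, where u="1" and v="-1" and w="1" and z="1"])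
       (simp add: cf_def V_act_def tgt_def Fv_def Tv_def algebra_simps)
  have f_1_3_1: "N dvd (c (1,3,1) - tgt c 1 3 1)"
    by (rule comb4[OF E[of 1 0 1 1 3 1, simplified] f_1_1_0 f_1_1_1 f_3_0_1, where u="-1" and v="-1" and w="1" and z="1"])
       (simp add: cf_def V_act_def tgt_def Fv_def Tv_def algebra_simps)
  have f_1_3_3: "N dvd (c (1,3,3) - tgt c 1 3 3)"
    by (rule comb4[OF E[of 1 0 1 1 3 3, simplified] f_1_1_1 f_1_1_2 f_3_0_3, where u="-1" and v="1" and w="-1" and z="1"])
       (simp add: cf_def V_act_def tgt_def Fv_def Tv_def algebra_simps)
  have f_2_0_1: "N dvd (c (2,0,1) - tgt c 2 0 1)"
    by (rule comb4[OF E[of 1 0 1 2 0 1, simplified] f_1_1_0 f_1_1_1 f_2_1_1, where u="-1" and v="1" and w="-1" and z="1"])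
       (simp add: cf_def V_act_def tgt_def Fv_def Tv_def algebra_simps)
  have f_2_2_1: "N dvd (c (2,2,1) - tgt c 2 2 1)"
    by (rule comb4[OF E[of 1 0 1 2 1 1, simplified] f_1_1_1 f_1_1_2 f_2_1_1, where u="1" and v="-1" and w="1" and z="1"])
       (simp add: cf_def V_act_def tgt_def Fv_def Tv_def algebra_simps)
  have f_2_1_2: "N dvd (c (2,1,2) - tgt c 2 1 2)"
    by (rule comb4[OF E[of 1 0 1 2 1 2, simplified] f_1_1_1 f_1_1_3 f_2_2_2, where u="-1" and v="1" and w="-1" and z="1"])
       (simp add: cf_def V_act_def tgt_def Fv_def Tv_def algebra_simps)
  have f_2_1_3: "N dvd (c (2,1,3) - tgt c 2 1 3)"
    by (rule comb4[OF E[of 1 0 1 2 1 3, simplified] f_1_1_0 f_1_1_1 f_2_2_3, where u="-1" and v="-1" and w="1" and z="1"])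
       (simp add: cf_def V_act_def tgt_def Fv_def Tv_def algebra_simps)
  have f_2_3_1: "N dvd (c (2,3,1) - tgt c 2 3 1)"
    by (rule comb4[OF E[of 1 0 1 2 2 1, simplified] f_1_1_2 f_1_1_3 f_2_2_1, where u="1" and v="-1" and w="1" and z="1"])
       (simp add: cf_def V_act_def tgt_def Fv_def Tv_def algebra_simps)
  have f_2_3_3: "N dvd (c (2,3,3) - tgt c 2 3 3)"
    by (rule comb4[OF E[of 1 0 1 2 2 3, simplified] f_1_1_1 f_1_1_2 f_2_2_3, where u="1" and v="1" and w="-1" and z="1"])
       (simp add: cf_def V_act_def tgt_def Fv_def Tv_def algebra_simps)
  have f_2_0_2: "N dvd (c (2,0,2) - tgt c 2 0 2)"
    by (rule comb4[OF E[of 1 0 1 2 3 2, simplified] f_1_1_1 f_1_1_3 f_2_3_2, where u="1" and v="1" and w="-1" and z="1"])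
       (simp add: cf_def V_act_def tgt_def Fv_def Tv_def algebra_simps)
  have f_2_0_3: "N dvd (c (2,0,3) - tgt c 2 0 3)"
    by (rule comb4[OF E[of 1 0 1 2 3 3, simplified] f_1_1_2 f_1_1_3 f_2_3_3, where u="1" and v="1" and w="-1" and z="1"])
       (simp add: cf_def V_act_def tgt_def Fv_def Tv_def algebra_simps)
  have f_3_0_2: "N dvd (c (3,0,2) - tgt c 3 0 2)"
    by (rule comb4[OF E[of 1 0 1 3 0 2, simplified] f_1_1_2 dvd_0_right dvd_0_right, where u="-1" and v="1" and w="0" and z="0"])
       (simp add: cf_def V_act_def tgt_def Fv_def Tv_def algebra_simps)
  have f_1_2_0: "N dvd (c (1,2,0) - tgt c 1 2 0)"
    by (rule comb4[OF E[of 1 0 1 3 1 0, simplified] f_1_1_1 f_1_1_3 f_3_1_0, where u="1" and v="1" and w="-1" and z="1"])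
       (simp add: cf_def V_act_def tgt_def Fv_def Tv_def algebra_simps)
  have f_1_3_2: "N dvd (c (1,3,2) - tgt c 1 3 2)"
    by (rule comb4[OF E[of 1 0 1 3 2 2, simplified] f_3_2_2 dvd_0_right dvd_0_right, where u="1" and v="1" and w="0" and z="0"])
       (simp add: cf_def V_act_def tgt_def Fv_def Tv_def algebra_simps)
  have f_3_3_0: "N dvd (c (3,3,0) - tgt c 3 3 0)"
    by (rule comb4[OF E[of 1 0 1 3 3 0, simplified] f_1_0_0 f_1_1_1 f_1_1_3, where u="-1" and v="1" and w="1" and z="-1"])
       (simp add: cf_def V_act_def tgt_def Fv_def Tv_def algebra_simps)
  have f_0_2_2: "N dvd (c (0,2,2) - tgt c 0 2 2)"
    by (rule comb4[OF E[of 1 0 2 0 0 2, simplified] f_0_0_2 f_1_2_0 f_1_2_2, where u="1" and v="1" and w="-1" and z="1"])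
       (simp add: cf_def V_act_def tgt_def Fv_def Tv_def algebra_simps)
  have f_0_2_3: "N dvd (c (0,2,3) - tgt c 0 2 3)"
    by (rule comb4[OF E[of 1 0 2 0 0 3, simplified] f_0_0_3 f_1_2_0 f_1_2_3, where u="1" and v="1" and w="-1" and z="1"])
       (simp add: cf_def V_act_def tgt_def Fv_def Tv_def algebra_simps)
  have f_0_1_1: "N dvd (c (0,1,1) - tgt c 0 1 1)"
    by (rule comb4[OF E[of 1 0 2 0 1 1, simplified] f_0_3_1 f_1_2_1 f_1_2_2, where u="-1" and v="1" and w="1" and z="-1"])
       (simp add: cf_def V_act_def tgt_def Fv_def Tv_def algebra_simps)
  have f_0_3_2: "N dvd (c (0,3,2) - tgt c 0 3 2)"
    by (rule comb4[OF E[of 1 0 2 0 1 2, simplified] f_1_2_1 f_1_2_3 dvd_0_right, where u="1" and v="-1" and w="1" and z="0"])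
       (simp add: cf_def V_act_def tgt_def Fv_def Tv_def algebra_simps)
  have f_2_0_0: "N dvd (c (2,0,0) - tgt c 2 0 0)"
    by (rule comb4[OF E[of 1 1 0 0 0 0, simplified] f_1_0_0 f_1_2_0 dvd_0_right, where u="-1" and v="1" and w="1" and z="0"])
       (simp add: cf_def V_act_def tgt_def Fv_def Tv_def algebra_simps)
  have f_2_1_0: "N dvd (c (2,1,0) - tgt c 2 1 0)"
    by (rule comb4[OF E[of 1 1 0 1 1 0, simplified] f_1_1_0 f_1_2_3 f_2_0_1, where u="1" and v="1" and w="-1" and z="1"])
       (simp add: cf_def V_act_def tgt_def Fv_def Tv_def algebra_simps)
  have f_2_2_0: "N dvd (c (2,2,0) - tgt c 2 2 0)"
    by (rule comb4[OF E[of 1 1 0 1 2 0, simplified] f_2_0_2 dvd_0_right dvd_0_right, where u="1" and v="1" and w="0" and z="0"])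
       (simp add: cf_def V_act_def tgt_def Fv_def Tv_def algebra_simps)
  have f_2_3_0: "N dvd (c (2,3,0) - tgt c 2 3 0)"
    by (rule comb4[OF E[of 1 1 0 1 3 0, simplified] f_1_2_1 f_1_3_0 f_2_0_3, where u="1" and v="-1" and w="1" and z="1"])
       (simp add: cf_def V_act_def tgt_def Fv_def Tv_def algebra_simps)
  show ?thesis
  proof (intro ballI)
    fix m h g :: int assume "m \<in> {0..<4}" "h \<in> {0..<4}" "g \<in> {0..<4}"
    then have "m \<in> {0,1,2,3}" "h \<in> {0,1,2,3}" "g \<in> {0,1,2,3}" by auto
    then show "N dvd (c (m,h,g) - tgt c m h g)"
      using f_0_0_0 f_0_0_1 f_0_0_2 f_0_0_3 f_0_1_0 f_0_1_1 f_0_1_2 f_0_1_3 f_0_2_0 f_0_2_1 f_0_2_2 f_0_2_3 f_0_3_0 f_0_3_1 f_0_3_2 f_0_3_3 f_1_0_0 f_1_0_1 f_1_0_2 f_1_0_3 f_1_1_0 f_1_1_1 f_1_1_2 f_1_1_3 f_1_2_0 f_1_2_1 f_1_2_2 f_1_2_3 f_1_3_0 f_1_3_1 f_1_3_2 f_1_3_3 f_2_0_0 f_2_0_1 f_2_0_2 f_2_0_3 f_2_1_0 f_2_1_1 f_2_1_2 f_2_1_3 f_2_2_0 f_2_2_1 f_2_2_2 f_2_2_3 f_2_3_0 f_2_3_1 f_2_3_2 f_2_3_3 f_3_0_0 f_3_0_1 f_3_0_2 f_3_0_3 f_3_1_0 f_3_1_1 f_3_1_2 f_3_1_3 f_3_2_0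 f_3_2_1 f_3_2_2 f_3_2_3 f_3_3_0 f_3_3_1 f_3_3_2 f_3_3_3 by auto
  qed
qed


abbreviation "DD \<equiv> {0..<4::int} \<times> {0..<4::int} \<times> {0..<4::int}"
abbreviation "ZG n \<equiv> xm_Z2_group V_G V_M (Zmod n) V_mu V_act trivial_action"
abbreviation "B2 n \<equiv> xm_B2 V_G V_M (Zmod n) V_mu trivial_action"

lemma C2_iff: "c \<in> xm_C2 V_G V_M (Zmod n) \<longleftrightarrow> c \<in> extensional DD \<and> (\<forall>x\<in>DD. c x mod int n = c x)"
  by (auto simp: xm_C2_def dom2_eq carrier_Zmod PiE_def Pi_def)

lemma Z2_iff: "c \<in> Z2 n \<longleftrightarrow> c \<in> xm_C2 V_G V_M (Zmod n) \<and>
   (\<forall>p q k m h g. p \<in> {0..<4} \<longrightarrow> q \<in> {0..<4} \<longrightarrow> k \<in> {0..<4} \<longrightarrow> m \<in> {0..<4} \<longrightarrow> h \<in> {0..<4} \<longrightarrow> g \<in> {0..<4} \<longrightarrow> int n dvd cf c p q k m h g)"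
proof
  assume a: "c \<in> Z2 n"
  then have c: "c \<in> xm_C2 V_G V_M (Zmod n)" by (simp add: xm_Z2_def)
  show "c \<in> xm_C2 V_G V_M (Zmod n) \<and>
   (\<forall>p q k m h g. p \<in> {0..<4} \<longrightarrow> q \<in> {0..<4} \<longrightarrow> k \<in> {0..<4} \<longrightarrow> m \<in> {0..<4} \<longrightarrow> h \<in> {0..<4} \<longrightarrow> g \<in> {0..<4} \<longrightarrow> int n dvd cf c p q k m h g)"
  proof (intro conjI c allI impI)
    fix p q k m h g :: int
    assume x: "p \<in> {0..<4}" "q \<in> {0..<4}" "k \<in> {0..<4}" "m \<in> {0..<4}" "h \<in> {0..<4}" "g \<in> {0..<4}"
    then have "(p,q,k,m,h,g) \<in> xm_dom3 V_G V_M" by (simp add: dom3_eq)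
    then have "xm_d2 V_G V_M (Zmod n) V_mu V_act trivial_action c (p,q,k,m,h,g) = 0"
      using a by (simp add: xm_Z2_def)
    then show "int n dvd cf c p q k m h g" using d2_eq[OF c x] by (simp add: dvd_eq_mod_eq_0)
  qed
next
  assume a: "c \<in> xm_C2 V_G V_M (Zmod n) \<and>
   (\<forall>p q k m h g. p \<in> {0..<4} \<longrightarrow> q \<in> {0..<4} \<longrightarrow> k \<in> {0..<4} \<longrightarrow> m \<in> {0..<4} \<longrightarrow> h \<in> {0..<4} \<longrightarrow> g \<in> {0..<4} \<longrightarrow> int n dvd cf c p q k m h g)"
  then have c: "c \<in> xm_C2 V_G V_M (Zmod n)" by simp
  have "\<forall>x\<in>xm_dom3 V_G V_M. xm_d2 V_G V_M (Zmod n) V_mu V_act trivial_action c x = 0"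
  proof
    fix x assume "x \<in> xm_dom3 V_G V_M"
    then obtain p q k m h g where xx: "x = (p,q,k,m,h,g)" and
      x: "p \<in> {0..<4}" "q \<in> {0..<4}" "k \<in> {0..<4}" "m \<in> {0..<4}" "h \<in> {0..<4}" "g \<in> {0..<4}"
      by (auto simp: dom3_eq)
    have "int n dvd cf c p q k m h g" using a x by blast
    then show "xm_d2 V_G V_M (Zmod n) V_mu V_act trivial_action c x = 0"
      using d2_eq[OF c x] xx by (simp add: dvd_eq_mod_eq_0)
  qed
  then show "c \<in> Z2 n" using c by (simp add: xm_Z2_def)
qed

lemma cf_cong:
  assumes "\<forall>x\<in>DD. a x = b x"
    "p \<in> {0..<4}" "q \<in> {0..<4}" "k \<in> {0..<4}" "m \<in> {0..<4}" "h \<in> {0..<4}" "g \<in> {0..<4}"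
  shows "cf a p q k m h g = cf b p q k m h g"
  using assms by (simp add: cf_def)

lemma cf_add: "cf (\<lambda>x. a x + b x) p q k m h g = cf a p q k m h g + cf b p q k m h g"
  by (simp add: cf_def algebra_simps)
lemma cf_neg: "cf (\<lambda>x. - a x) p q k m h g = - cf a p q k m h g"
  by (simp add: cf_def algebra_simps)
lemma cf_zero: "cf (\<lambda>x. 0) p q k m h g = 0"
  by (simp add: cf_def)
lemma cf_mod: "cf (\<lambda>x. a x mod N) p q k m h g = cf a p q k m h g - N * cf (\<lambda>x. a x div N) p q k m h g"
  by (simp add: cf_def minus_div_mult_eq_mod[symmetric] algebra_simps)

lemma Z2_intro:
  assumes "\<And>p q k m h g. p \<in> {0..<4} \<Longrightarrow> q \<in> {0..<4} \<Longrightarrow> k \<in> {0..<4} \<Longrightarrow> m \<in> {0..<4} \<Longrightarrow> h \<in> {0..<4} \<Longrightarrow> g \<in> {0..<4} \<Longrightarrow> int n dvd cf a p q k m h g"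
  shows "restrict (\<lambda>x. a x mod int n) DD \<in> Z2 n"
  unfolding Z2_iff C2_iff
proof (intro conjI allI impI)
  show "restrict (\<lambda>x. a x mod int n) DD \<in> extensional DD" by simp
  show "\<forall>x\<in>DD. restrict (\<lambda>x. a x mod int n) DD x mod int n = restrict (\<lambda>x. a x mod int n) DD x" by simp
  fix p q k m h g :: int
  assume x: "p \<in> {0..<4}" "q \<in> {0..<4}" "k \<in> {0..<4}" "m \<in> {0..<4}" "h \<in> {0..<4}" "g \<in> {0..<4}"
  have "cf (restrict (\<lambda>x. a x mod int n) DD) p q k m h g = cf (\<lambda>x. a x mod int n) p q k m h g"
    by (rule cf_cong) (use x in auto)
  also have "\<dots> = cf a p q k m h g - int n * cf (\<lambda>x. a x div int n) p q k m h g" by (rule cf_mod)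
  finally show "int n dvd cf (restrict (\<lambda>x. a x mod int n) DD) p q k m h g"
    using assms[OF x] by simp
qed

lemma Z2_E:
  assumes "c \<in> Z2 n" "p \<in> {0..<4}" "q \<in> {0..<4}" "k \<in> {0..<4}" "m \<in> {0..<4}" "h \<in> {0..<4}" "g \<in> {0..<4}"
  shows "int n dvd cf c p q k m h g"
  using assms by (simp add: Z2_iff)

lemma Z2_ext: "c \<in> Z2 n \<Longrightarrow> c \<in> extensional DD"
  by (simp add: Z2_iff C2_iff)
lemma Z2_val: "c \<in> Z2 n \<Longrightarrow> x \<in> DD \<Longrightarrow> c x mod int n = c x"
  unfolding Z2_iff C2_iff by blast

lemma carrier_ZG[simp]: "carrier (ZG n) = Z2 n" by (simp add: xm_Z2_group_def)
lemma mult_ZG[simp]: "c \<otimes>\<^bsub>ZG n\<^esub> c' = restrict (\<lambda>x. (c x + c' x) mod int n) DD"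
  by (simp add: xm_Z2_group_def dom2_eq)
lemma one_ZG[simp]: "\<one>\<^bsub>ZG n\<^esub> = restrict (\<lambda>x. 0) DD"
  by (simp add: xm_Z2_group_def dom2_eq one_Zmod)

lemma ZG_group: "comm_group (ZG n)"
proof (rule comm_groupI)
  fix x y assume x: "x \<in> carrier (ZG n)" and y: "y \<in> carrier (ZG n)"
  show "x \<otimes>\<^bsub>ZG n\<^esub> y \<in> carrier (ZG n)"
    using x y by (auto intro!: Z2_intro simp: cf_add Z2_E)
  show "x \<otimes>\<^bsub>ZG n\<^esub> y = y \<otimes>\<^bsub>ZG n\<^esub> x" by (simp add: add.commute)
next
  have "restrict (\<lambda>x. 0 mod int n) DD \<in> Z2 n" by (rule Z2_intro) (simp add: cf_zero)
  then show "\<one>\<^bsub>ZG n\<^esub> \<in> carrier (ZG n)" by simp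
next
  fix x y z assume "x \<in> carrier (ZG n)" "y \<in> carrier (ZG n)" "z \<in> carrier (ZG n)"
  show "x \<otimes>\<^bsub>ZG n\<^esub> y \<otimes>\<^bsub>ZG n\<^esub> z = x \<otimes>\<^bsub>ZG n\<^esub> (y \<otimes>\<^bsub>ZG n\<^esub> z)"
    by (auto simp: restrict_def fun_eq_iff mod_add_left_eq mod_add_right_eq add.assoc)
next
  fix x assume x: "x \<in> carrier (ZG n)"
  show "\<one>\<^bsub>ZG n\<^esub> \<otimes>\<^bsub>ZG n\<^esub> x = x"
  proof
    fix y show "(\<one>\<^bsub>ZG n\<^esub> \<otimes>\<^bsub>ZG n\<^esub> x) y = x y"
    proof (cases "y \<in> DD")
      case True then show ?thesis using Z2_val[of x n y] x by simp
    next
      case False then show ?thesis using extensional_arb[OF Z2_ext[of x n] False] x by simp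
    qed
  qed
next
  fix x assume x: "x \<in> carrier (ZG n)"
  have i: "restrict (\<lambda>y. (- x y) mod int n) DD \<in> Z2 n"
    using x by (auto intro!: Z2_intro simp: cf_neg Z2_E)
  have "restrict (\<lambda>y. (- x y) mod int n) DD \<otimes>\<^bsub>ZG n\<^esub> x = \<one>\<^bsub>ZG n\<^esub>"
    by (auto simp: restrict_def fun_eq_iff mod_add_left_eq)
  then show "\<exists>y\<in>carrier (ZG n). y \<otimes>\<^bsub>ZG n\<^esub> x = \<one>\<^bsub>ZG n\<^esub>" using i
    by (intro bexI[where x="restrict (\<lambda>y. (- x y) mod int n) DD"]) simp_all
qed


lemma C1_iff: "f \<in> xm_C1 V_G (Zmod n) \<longleftrightarrow> f \<in> extensional {0..<4} \<and> (\<forall>x\<in>{0..<4}. f x mod int n = f x)"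
  by (auto simp: xm_C1_def carrier_VG carrier_Zmod PiE_def Pi_def)

definition d1f :: "(int \<Rightarrow> int) \<Rightarrow> int \<times> int \<times> int \<Rightarrow> int" where
  "d1f f = (\<lambda>(m,h,g). f ((2*m mod 4 + h) mod 4) - f ((h+g) mod 4) + f g)"

lemma d1_eq:
  assumes f: "f \<in> xm_C1 V_G (Zmod n)"
  shows "xm_d1 V_G V_M (Zmod n) V_mu trivial_action f = restrict (\<lambda>x. d1f f x mod int n) DD"
proof
  fix x show "xm_d1 V_G V_M (Zmod n) V_mu trivial_action f x = restrict (\<lambda>x. d1f f x mod int n) DD x"
  proof (cases "x \<in> DD")
    case False then show ?thesis by (simp add: xm_d1_def dom2_eq)
  next
    case True
    then obtain m h g where xx: "x = (m,h,g)" and x: "m \<in> {0..<4}" "h \<in> {0..<4}" "g \<in> {0..<4}" by auto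
    have fc: "\<And>a. a \<in> {0..<4} \<Longrightarrow> f a \<in> carrier (Zmod n)" using f by (auto simp: xm_C1_def carrier_VG)
    have r: "\<And>a::int. a mod 4 \<in> {0..<4}" by simp
    have mem: "(m,h,g) \<in> xm_dom2 V_G V_M" using x by (simp add: dom2_eq)
    have "xm_d1 V_G V_M (Zmod n) V_mu trivial_action f (m,h,g) =
       ((f ((2*m mod 4 + h) mod 4) + (- f ((h+g) mod 4)) mod int n) mod int n + f g) mod int n"
      apply (simp only: xm_d1_def restrict_apply' [OF mem] prod.case mult_Zmod mult_VG mult_VM V_mu_def trivial_action_def)
      apply (simp only: inv_Zmod[OF fc] r x)
      done
    also have "\<dots> = d1f f (m,h,g) mod int n"
      by (simp only: mod_add_left_eq mod_add_right_eq d1f_def prod.case diff_conv_add_uminus add.assoc)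
    finally show ?thesis using xx True by simp
  qed
qed

lemma r4: "x \<in> {0..<4::int} \<Longrightarrow> x = 0 \<or> x = 1 \<or> x = 2 \<or> x = 3" by auto

lemma arg_eqs:
  fixes p q k m h g :: int
  assumes "p \<in> {0..<4}" "q \<in> {0..<4}" "k \<in> {0..<4}" "m \<in> {0..<4}" "h \<in> {0..<4}" "g \<in> {0..<4}"
  shows "(2*p mod 4 + (2*q mod 4 + k) mod 4) mod 4 = (2*((p+q) mod 4) mod 4 + k) mod 4"
    "((2*q mod 4 + k) mod 4 + (2*m mod 4 + h) mod 4) mod 4 = (2*((q + V_act k m) mod 4) mod 4 + (k+h) mod 4) mod 4"
    "(k + (h+g) mod 4) mod 4 = ((k+h) mod 4 + g) mod 4"
proof -
  show "(2*p mod 4 + (2*q mod 4 + k) mod 4) mod 4 = (2*((p+q) mod 4) mod 4 + k) mod 4"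
    using r4[OF assms(1)] r4[OF assms(2)] r4[OF assms(3)] by (elim disjE) simp_all
  show "(k + (h+g) mod 4) mod 4 = ((k+h) mod 4 + g) mod 4"
    using r4[OF assms(3)] r4[OF assms(5)] r4[OF assms(6)] by (elim disjE) simp_all
  show "((2*q mod 4 + k) mod 4 + (2*m mod 4 + h) mod 4) mod 4 = (2*((q + V_act k m) mod 4) mod 4 + (k+h) mod 4) mod 4"
    using r4[OF assms(2)] r4[OF assms(3)] r4[OF assms(4)] r4[OF assms(5)] by (elim disjE) (simp_all add: V_act_def)
qed

lemma cf_d1f:
  assumes x: "p \<in> {0..<4}" "q \<in> {0..<4}" "k \<in> {0..<4}" "m \<in> {0..<4}" "h \<in> {0..<4}" "g \<in> {0..<4}"
  shows "cf (d1f f) p q k m h g = 0"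
  by (simp only: cf_def d1f_def prod.case arg_eqs[OF x])

lemma d1_in_Z2: "f \<in> xm_C1 V_G (Zmod n) \<Longrightarrow> xm_d1 V_G V_M (Zmod n) V_mu trivial_action f \<in> Z2 n"
  by (simp add: d1_eq) (rule Z2_intro, simp add: cf_d1f)

lemma B2_sub: "B2 n \<subseteq> Z2 n"
  by (auto simp: xm_B2_def d1_in_Z2)

definition om :: "int \<times> int \<times> int \<Rightarrow> int" where
  "om = (\<lambda>(m,h,g). if odd h \<and> odd g then 1 else 0)"

lemma even_mod4: "even ((x::int) mod 4) = even x" by presburger

lemma cf_om: "cf om p q k m h g = 0"
  by (cases "even k"; cases "even h"; cases "even g") (simp_all add: cf_def om_def even_mod4)


lemma cobound:
  assumes c: "c \<in> Z2 n" and s: "int n dvd (2*s - Tv c)"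
  shows "c \<in> B2 n"
proof -
  let ?N = "int n"
  define f where "f = restrict (\<lambda>g. (Fv c g + s * (g mod 2)) mod ?N) {0..<4}"
  have fC: "f \<in> xm_C1 V_G (Zmod n)" by (simp add: C1_iff f_def)
  have K: "\<forall>m\<in>{0..<4}. \<forall>h\<in>{0..<4}. \<forall>g\<in>{0..<4}. ?N dvd (c (m,h,g) - tgt c m h g)"
    by (rule key) (rule Z2_E[OF c], assumption+)
  have "xm_d1 V_G V_M (Zmod n) V_mu trivial_action f = c"
  proof
    fix x show "xm_d1 V_G V_M (Zmod n) V_mu trivial_action f x = c x"
    proof (cases "x \<in> DD")
      case False then show ?thesis using d1_eq[OF fC] extensional_arb[OF Z2_ext[OF c] False] by simp
    next
      case True
      then obtain m h g where xx: "x = (m,h,g)" and x: "m \<in> {0..<4}" "h \<in> {0..<4}" "g \<in> {0..<4}" by auto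
      define a where "a = (2*m mod 4 + h) mod 4"
      define b where "b = (h+g) mod 4"
      have ar: "a \<in> {0..<4}" "b \<in> {0..<4}" by (simp_all add: a_def b_def)
      define t1 where "t1 = Fv c a + s * (a mod 2)"
      define t2 where "t2 = Fv c b + s * (b mod 2)"
      define t3 where "t3 = Fv c g + s * (g mod 2)"
      have dv: "d1f f (m,h,g) = t1 mod ?N - t2 mod ?N + t3 mod ?N"
        using ar x by (simp add: d1f_def f_def t1_def t2_def t3_def a_def b_def)
      have pa: "a mod 2 = h mod 2" unfolding a_def by presburger
      have pb: "b mod 2 = (h + g) mod 2" unfolding b_def by presburger
      have p1: "odd h \<and> odd g \<Longrightarrow> a mod 2 - b mod 2 + g mod 2 = 2" unfolding pa pb by presburger
      have p2: "\<not> (odd h \<and> odd g) \<Longrightarrow> a mod 2 - b mod 2 + g mod 2 = 0" unfolding pa pb by presburger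
      have e0: "t1 - t2 + t3 - tgt c m h g = s * (a mod 2 - b mod 2 + g mod 2) - (if odd h \<and> odd g then Tv c else 0)"
        by (simp add: t1_def t2_def t3_def tgt_def a_def b_def algebra_simps)
      have e1: "?N dvd (t1 - t2 + t3 - tgt c m h g)"
      proof (cases "odd h \<and> odd g")
        case True
        then have "t1 - t2 + t3 - tgt c m h g = 2 * s - Tv c" using e0 p1 by simp
        then show ?thesis using s by simp
      next
        case False
        have "(if odd h \<and> odd g then Tv c else 0) = 0" by (rule if_not_P[OF False])
        then have "t1 - t2 + t3 - tgt c m h g = 0" using e0 p2[OF False] by simp
        then show ?thesis by simp
      qed
      have e2: "t1 mod ?N - t2 mod ?N + t3 mod ?N - (t1 - t2 + t3) = ?N * (t2 div ?N - t1 div ?N - t3 div ?N)"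
        by (simp add: minus_div_mult_eq_mod[symmetric] algebra_simps)
      have e3: "?N dvd (c (m,h,g) - tgt c m h g)" using K x by blast
      have "d1f f (m,h,g) - c (m,h,g) = (t1 mod ?N - t2 mod ?N + t3 mod ?N - (t1 - t2 + t3))
          + (t1 - t2 + t3 - tgt c m h g) - (c (m,h,g) - tgt c m h g)" using dv by simp
      then have "?N dvd (d1f f (m,h,g) - c (m,h,g))"
        using e1 e3 unfolding e2 by (metis dvd_add dvd_diff dvd_triv_left)
      then have "d1f f (m,h,g) mod ?N = c (m,h,g) mod ?N" by (simp add: mod_eq_dvd_iff)
      then show ?thesis using d1_eq[OF fC] xx True Z2_val[OF c True] by simp
    qed
  qed
  then show ?thesis using fC unfolding xm_B2_def by (metis image_eqI)
qed

definition th :: "(int \<times> int \<times> int \<Rightarrow> int) \<Rightarrow> int" where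
  "th c = (c (3,3,1) + c (0,0,0)) mod 2"

lemma m2: "2 dvd (N::int) \<Longrightarrow> (a mod N + b mod N) mod 2 = (a + b) mod 2"
  by (metis mod_add_eq mod_mod_cancel)

lemma group_Zmod: "group (Zmod k)" by (simp add: Zmod_eq)

lemma th_hom: assumes "even n" shows "group_hom (ZG n) (Zmod 2) th"
proof -
  have N2: "2 dvd int n" using assms by simp
  have "th \<in> hom (ZG n) (Zmod 2)"
  proof (rule homI)
    fix x show "th x \<in> carrier (Zmod 2)" by (simp add: carrier_Zmod th_def)
  next
    fix x y assume "x \<in> carrier (ZG n)" "y \<in> carrier (ZG n)"
    show "th (x \<otimes>\<^bsub>ZG n\<^esub> y) = th x \<otimes>\<^bsub>Zmod 2\<^esub> th y"
      using m2[OF N2, of "x (3,3,1) + y (3,3,1)" "x (0,0,0) + y (0,0,0)"]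
      by (simp add: th_def mod_add_eq algebra_simps)
  qed
  then show ?thesis
    using ZG_group[of n] group_Zmod[of 2]
    by (simp add: group_hom_def group_hom_axioms_def comm_group.axioms(2))
qed

lemma one_Z2: "restrict (\<lambda>x. 0) DD \<in> Z2 n"
proof -
  interpret comm_group "ZG n" by (rule ZG_group)
  show ?thesis using one_closed by simp
qed

lemma th_onto: assumes "even n" shows "th ` carrier (ZG n) = carrier (Zmod 2)"
proof
  show "th ` carrier (ZG n) \<subseteq> carrier (Zmod 2)" by (auto simp: carrier_Zmod th_def)
next
  have N2: "2 dvd int n" using assms by simp
  have w: "restrict (\<lambda>x. om x mod int n) DD \<in> Z2 n" by (rule Z2_intro) (simp add: cf_om)
  have "th (restrict (\<lambda>x. om x mod int n) DD) = 1"
    using m2[OF N2, of 1 0] by (simp add: th_def om_def)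
  moreover have "th (restrict (\<lambda>x. 0) DD) = 0" by (simp add: th_def)
  moreover have "carrier (Zmod 2) = {0, 1}" by (auto simp: Zmod_def)
  ultimately show "carrier (Zmod 2) \<subseteq> th ` carrier (ZG n)" using w one_Z2[of n]
    by (auto intro: image_eqI)
qed

lemma th_kernel: assumes "even n" shows "kernel (ZG n) (Zmod 2) th = B2 n"
proof
  have N2: "2 dvd int n" using assms by simp
  show "B2 n \<subseteq> kernel (ZG n) (Zmod 2) th"
  proof
    fix x assume x: "x \<in> B2 n"
    then obtain f where f: "f \<in> xm_C1 V_G (Zmod n)" and xf: "x = xm_d1 V_G V_M (Zmod n) V_mu trivial_action f"
      by (auto simp: xm_B2_def)
    have "th x = (d1f f (3,3,1) + d1f f (0,0,0)) mod 2"
      using m2[OF N2, of "d1f f (3,3,1)" "d1f f (0,0,0)"] by (simp add: xf d1_eq[OF f] th_def)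
    also have "\<dots> = 0" by (simp add: d1f_def)
    finally show "x \<in> kernel (ZG n) (Zmod 2) th" using x B2_sub by (auto simp: kernel_def)
  qed
next
  show "kernel (ZG n) (Zmod 2) th \<subseteq> B2 n"
  proof
    fix c assume "c \<in> kernel (ZG n) (Zmod 2) th"
    then have c: "c \<in> Z2 n" and t: "th c = 0" by (auto simp: kernel_def)
    have "even (Tv c)" using t unfolding Tv_def th_def by presburger
    then have "int n dvd (2 * (Tv c div 2) - Tv c)" by simp
    then show "c \<in> B2 n" by (rule cobound[OF c])
  qed
qed

lemma odd_all: assumes "odd n" shows "Z2 n = B2 n"
proof
  show "B2 n \<subseteq> Z2 n" by (rule B2_sub)
  show "Z2 n \<subseteq> B2 n"
  proof
    fix c assume c: "c \<in> Z2 n"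
    have o: "2 * ((int n + 1) div 2) = int n + 1" using assms by presburger
    have "2 * (Tv c * ((int n + 1) div 2)) - Tv c = Tv c * (2 * ((int n + 1) div 2)) - Tv c"
      by (metis mult.assoc mult.commute)
    also have "\<dots> = Tv c * int n" unfolding o by (simp add: algebra_simps)
    finally have "2 * (Tv c * ((int n + 1) div 2)) - Tv c = Tv c * int n" .
    then have "int n dvd (2 * (Tv c * ((int n + 1) div 2)) - Tv c)" by simp
    then show "c \<in> B2 n" by (rule cobound[OF c])
  qed
qed


lemma H2_eq: "xm_H2 V_G V_M (Zmod n) V_mu V_act trivial_action = ZG n Mod B2 n"
  by (simp add: xm_H2_def)

theorem mainTheorem19:
  fixes n :: nat
  shows "(even n \<longrightarrow> xm_H2 V_G V_M (Zmod n) V_mu V_act trivial_action \<cong> Zmod 2)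
       \<and> (odd n \<longrightarrow> trivial_group (xm_H2 V_G V_M (Zmod n) V_mu V_act trivial_action))"
proof (intro conjI impI)
  assume e: "even n"
  have "ZG n Mod kernel (ZG n) (Zmod 2) th \<cong> Zmod 2"
    by (rule group_hom.FactGroup_iso[OF th_hom[OF e] th_onto[OF e]])
  then show "xm_H2 V_G V_M (Zmod n) V_mu V_act trivial_action \<cong> Zmod 2"
    by (simp add: H2_eq th_kernel[OF e])
next
  assume o: "odd n"
  have gh: "group_hom (ZG n) (Zmod 1) (\<lambda>_. 0)"
  proof -
    have "(\<lambda>_. 0) \<in> hom (ZG n) (Zmod 1)"
      by (rule homI) (simp_all add: carrier_Zmod)
    then show ?thesis
      using ZG_group[of n] group_Zmod[of 1]
      by (simp add: group_hom_def group_hom_axioms_def comm_group.axioms(2))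
  qed
  have ker: "kernel (ZG n) (Zmod 1) (\<lambda>_. 0) = B2 n"
    using odd_all[OF o] by (simp add: kernel_def)
  have onto: "(\<lambda>_. 0::int) ` carrier (ZG n) = carrier (Zmod 1)"
  proof -
    have c1: "carrier (Zmod 1) = {0}" by (auto simp: Zmod_def)
    show ?thesis unfolding c1 carrier_ZG by (rule image_constant[OF one_Z2])
  qed
  have iso: "ZG n Mod B2 n \<cong> Zmod 1"
    using group_hom.FactGroup_iso[OF gh onto] ker by simp
  have grp: "group (ZG n Mod B2 n)"
    using normal.factorgroup_is_group[OF group_hom.normal_kernel[OF gh]] ker by simp
  have tr: "trivial_group (Zmod 1)" by (simp add: Zmod_eq trivial_integer_mod_group)
  show "trivial_group (xm_H2 V_G V_M (Zmod n) V_mu V_act trivial_action)"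
    using isomorphic_group_triviality[OF iso grp group_Zmod[of 1]] tr by (simp add: H2_eq)
qed

end
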